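(* Let $\beta,\gamma,\mu>0$, $0<p<\tfrac12$, $\delta=\beta/(\gamma+\mu)>4(1-p)$, and suppose $\frac{\gamma}{\mu}>F(\delta)$. Then the Jacobian at $E_1$ of the $(S_0,S_1,A)$ subsystem of the temporary adoption model has exactly one negative real eigenvalue, and its other two eigenvalues have positive real part (they are either both real and positive or a complex conjugate pair with positive real part). In particular $E_1$ has a two-dimensional unstable manifold.
   Context: The temporary adoption model is $S_0'=\mu-\beta S_0A-\mu S_0$, $S_1'=(1-p)\beta S_0A-\beta S_1A-\mu S_1$, $A'=\beta(pS_0+S_1)A-(\gamma+\mu)A$, $R'=\gamma A-\mu R$, with $S_0+S_1+A+R=1$. $E_1$ is the equilibrium with $A=A_1=\tfrac12(1+\tfrac{\gamma}{\mu})^{-1}\big[1-2\delta^{-1}+\sqrt{1-4(1-p)\delta^{-1}}\big]$, $S_0=1/(\delta(\frac{\gamma}{\mu}+1)A+1)$, $S_1=(1-p)\delta(\frac{\gamma}{\mu}+1)A/(\delta(\frac{\gamma}{\mu}+1)A+1)^2$, $R=\frac{\gamma}{\mu}A$. The function $F$ is $F(\delta)=\frac{\delta^2}{2(1-2p)}\cdot\frac{[1+\sqrt{1-4(1-p)\delta^{-1}}]^3}{(\delta-2)+\delta\sqrt{1-4(1-p)\delta^{-1}}}-1$. *)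

theory Defs
  imports "HOL-Analysis.Analysis"
begin

definition F_fun :: "real \<Rightarrow> real \<Rightarrow> real" where
  "F_fun p \<delta> = \<delta>^2 / (2 * (1 - 2*p)) *
     ((1 + sqrt (1 - 4*(1-p)/\<delta>))^3 / ((\<delta> - 2) + \<delta> * sqrt (1 - 4*(1-p)/\<delta>))) - 1"

definition A1 :: "real \<Rightarrow> real \<Rightarrow> real \<Rightarrow> real \<Rightarrow> real" where
  "A1 \<beta> \<gamma> \<mu> p = (let \<delta> = \<beta> / (\<gamma> + \<mu>) in
     (1/2) * inverse (1 + \<gamma>/\<mu>) * (1 - 2 / \<delta> + sqrt (1 - 4*(1-p)/\<delta>)))"

definition S0_1 :: "real \<Rightarrow> real \<Rightarrow> real \<Rightarrow> real \<Rightarrow> real" where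
  "S0_1 \<beta> \<gamma> \<mu> p = (let \<delta> = \<beta> / (\<gamma> + \<mu>); A = A1 \<beta> \<gamma> \<mu> p in
     1 / (\<delta> * (\<gamma>/\<mu> + 1) * A + 1))"

definition S1_1 :: "real \<Rightarrow> real \<Rightarrow> real \<Rightarrow> real \<Rightarrow> real" where
  "S1_1 \<beta> \<gamma> \<mu> p = (let \<delta> = \<beta> / (\<gamma> + \<mu>); A = A1 \<beta> \<gamma> \<mu> p in
     (1 - p) * \<delta> * (\<gamma>/\<mu> + 1) * A / (\<delta> * (\<gamma>/\<mu> + 1) * A + 1)^2)"

definition E1 :: "real \<Rightarrow> real \<Rightarrow> real \<Rightarrow> real \<Rightarrow> real^3" where
  "E1 \<beta> \<gamma> \<mu> p = vector [S0_1 \<beta> \<gamma> \<mu> p, S1_1 \<beta> \<gamma> \<mu> p, A1 \<beta> \<gamma> \<mu> p]"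

text \<open>The (S0,S1,A) subsystem of the temporary adoption model; x = (S0,S1,A).\<close>
definition field :: "real \<Rightarrow> real \<Rightarrow> real \<Rightarrow> real \<Rightarrow> real^3 \<Rightarrow> real^3" where
  "field \<beta> \<gamma> \<mu> p x = vector
     [\<mu> - \<beta> * x$1 * x$3 - \<mu> * x$1,
      (1 - p) * \<beta> * x$1 * x$3 - \<beta> * x$2 * x$3 - \<mu> * x$2,
      \<beta> * (p * x$1 + x$2) * x$3 - (\<gamma> + \<mu>) * x$3]"

definition cmat :: "real^'n^'n \<Rightarrow> complex^'n^'n" where
  "cmat J = (\<chi> i j. complex_of_real (J$i$j))"

end

theory Submission
  imports Defs
begin


lemma cubic_roots:
  fixes a2 a1 a0 :: real
  assumes a0: "a0 > 0" and h: "a2*a1 < a0"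
  shows "\<exists>r z1 z2. (\<forall>x::complex. x^3 + of_real a2 * x^2 + of_real a1 * x + of_real a0
            = (x - of_real r)*(x-z1)*(x-z2)) \<and> r<0 \<and> Re z1>0 \<and> Re z2>0 \<and>
            ((z1\<in>\<real> \<and> z2\<in>\<real>) \<or> (z2 = cnj z1 \<and> Im z1 \<noteq> 0))"
proof -
  define P where "P = (\<lambda>t::real. t^3 + a2*t^2 + a1*t + a0)"
  define M where "M = 1 + \<bar>a2\<bar> + \<bar>a1\<bar> + a0"
  have M1: "M \<ge> 1" using a0 by (simp add: M_def)
  have "P (-M) \<le> (-(M^3)) + \<bar>a2\<bar>*M^2 + \<bar>a1\<bar>*M^2 + a0*M^2"
  proof -
    have "a2*M^2 \<le> \<bar>a2\<bar>*M^2" by (simp add: mult_right_mono)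
    moreover have "-a1*M \<le> \<bar>a1\<bar>*M^2"
    proof -
      have "-a1*M \<le> \<bar>a1\<bar>*M" using mult_right_mono[of "-a1" "\<bar>a1\<bar>" M] M1 by simp
      also have "\<dots> \<le> \<bar>a1\<bar>*(M*M)" using M1 by (intro mult_left_mono) auto
      finally show ?thesis by (simp add: power2_eq_square)
    qed
    moreover have "a0 \<le> a0*M^2"
    proof -
      have "1 \<le> M^2" using M1 by (simp add: one_le_power)
      then show ?thesis using a0 by (simp add: mult_le_cancel_left1)
    qed
    ultimately show ?thesis by (simp add: P_def power3_eq_cube)
  qed
  also have "\<dots> = -(M^2)" by (simp add: M_def power2_eq_square power3_eq_cube algebra_simps)
  finally have "P (-M) \<le> -(M^2)" .
  then have Pm: "P (-M) \<le> 0" using zero_le_power2[of M] by linarith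
  have P0: "0 \<le> P 0" using a0 by (simp add: P_def)
  have "continuous_on {-M..0} P" unfolding P_def by (intro continuous_intros)
  then obtain r where r: "-M \<le> r" "r \<le> 0" "P r = 0" using IVT'[of P "-M" 0 0] Pm P0 M1 by auto
  have rn: "r < 0" using r a0 by (cases "r = 0") (auto simp: P_def)
  define c1 where "c1 = a2 + r"
  define c0 where "c0 = a1 + r*c1"
  have a0e: "a0 = -r*c0" using r(3) by (simp add: P_def c0_def c1_def power3_eq_cube power2_eq_square algebra_simps)
  have "0 < (-r)*c0" using a0e a0 by simp
  then have c0p: "c0 > 0" using rn by (auto simp: zero_less_mult_iff mult_less_0_iff)
  have key: "a2*a1 - a0 = c1*(r^2 - c1*r + c0)"
    using a0e by (simp add: c0_def c1_def power2_eq_square algebra_simps)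
  have c1n: "c1 < 0"
  proof (rule ccontr)
    assume "\<not> c1 < 0"
    then have "c1*r \<le> 0" using rn by (simp add: mult_nonneg_nonpos)
    then have "r^2 - c1*r + c0 > 0" using c0p zero_le_power2[of r] by linarith
    then have "c1*(r^2 - c1*r + c0) \<ge> 0" using \<open>\<not> c1 < 0\<close> by simp
    then show False using key h by simp
  qed
  have fac: "\<And>(x::complex) z1 z2. z1 + z2 = of_real (-c1) \<Longrightarrow> z1*z2 = of_real c0 \<Longrightarrow>
      x^3 + of_real a2 * x^2 + of_real a1 * x + of_real a0 = (x - of_real r)*(x-z1)*(x-z2)"
  proof -
    fix x z1 z2 :: complex
    assume s: "z1 + z2 = of_real (-c1)" and p: "z1*z2 = of_real c0"
    have "(x - of_real r)*(x-z1)*(x-z2) = (x - of_real r)*(x^2 - (z1+z2)*x + z1*z2)"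
      by (simp add: power2_eq_square algebra_simps)
    also have "\<dots> = (x - of_real r)*(x^2 + of_real c1*x + of_real c0)" by (simp add: s p)
    also have "\<dots> = x^3 + of_real a2 * x^2 + of_real a1 * x + of_real a0"
      by (simp add: a0e c0_def c1_def power2_eq_square power3_eq_cube algebra_simps)
    finally show "x^3 + of_real a2 * x^2 + of_real a1 * x + of_real a0 = (x - of_real r)*(x-z1)*(x-z2)" by simp
  qed
  define D where "D = c1^2 - 4*c0"
  show ?thesis
  proof (cases "D \<ge> 0")
    case True
    define z1 where "z1 = complex_of_real ((-c1 + sqrt D)/2)"
    define z2 where "z2 = complex_of_real ((-c1 - sqrt D)/2)"
    have sD: "sqrt D < -c1"
    proof -
      have "D < c1^2" using c0p by (simp add: D_def)
      then have "sqrt D < sqrt (c1^2)" by (rule real_sqrt_less_mono)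
      then show ?thesis using c1n by simp
    qed
    have S: "z1 + z2 = of_real (-c1)" by (simp add: z1_def z2_def complex_eq_iff field_simps)
    moreover have "z1*z2 = of_real c0"
    proof -
      have "((-c1 + sqrt D)/2)*((-c1 - sqrt D)/2) = (c1^2 - (sqrt D)^2)/4"
        by (simp add: power2_eq_square algebra_simps)
      also have "\<dots> = c0" using True by (simp add: D_def)
      moreover have "z1*z2 = of_real (((-c1 + sqrt D)/2)*((-c1 - sqrt D)/2))"
        unfolding z1_def z2_def of_real_mult ..
      ultimately show ?thesis by simp
    qed
    ultimately have F: "\<forall>x::complex. x^3 + of_real a2 * x^2 + of_real a1 * x + of_real a0
            = (x - of_real r)*(x-z1)*(x-z2)" using fac by blast
    have "-c1 + sqrt D > 0" using c1n real_sqrt_ge_zero[OF True] by linarith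
    then have "Re z1 > 0" by (simp add: z1_def)
    moreover have "Re z2 > 0" using sD by (simp add: z1_def z2_def)
    moreover have "z1 \<in> \<real>" "z2 \<in> \<real>" by (simp_all add: z1_def z2_def)
    ultimately show ?thesis using F rn by blast
  next
    case False
    define z1 where "z1 = Complex (-c1/2) (sqrt (-D)/2)"
    define z2 where "z2 = Complex (-c1/2) (-sqrt (-D)/2)"
    have S: "z1 + z2 = of_real (-c1)" by (simp add: z1_def z2_def complex_eq_iff field_simps)
    moreover have "z1*z2 = of_real c0" using False
      by (simp add: z1_def z2_def complex_eq_iff D_def power2_eq_square algebra_simps) (simp add: field_simps)
    moreover have "z2 = cnj z1" "Im z1 \<noteq> 0" using False by (auto simp: z1_def z2_def complex_eq_iff)
    moreover have F: "\<forall>x::complex. x^3 + of_real a2 * x^2 + of_real a1 * x + of_real a0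
            = (x - of_real r)*(x-z1)*(x-z2)" using fac calculation(1,2) by blast
    moreover have "Re z1 > 0" "Re z2 > 0" using c1n by (simp_all add: z1_def z2_def)
    ultimately show ?thesis using rn by blast
  qed
qed



lemma charpoly3:
  fixes J :: "real^3^3" and x :: complex
  shows "det (mat x - cmat J) = x^3 + of_real (-(J$1$1 + J$2$2 + J$3$3)) * x^2
     + of_real (J$1$1*J$2$2 - J$1$2*J$2$1 + J$1$1*J$3$3 - J$1$3*J$3$1 + J$2$2*J$3$3 - J$2$3*J$3$2) * x
     + of_real (-det J)"
  by (simp add: det_3 cmat_def mat_def algebra_simps power2_eq_square power3_eq_cube)

definition jac :: "real \<Rightarrow> real \<Rightarrow> real \<Rightarrow> real \<Rightarrow> real^3 \<Rightarrow> real^3^3" where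
  "jac \<beta> \<gamma> \<mu> p x = vector [
     vector [-\<beta>*x$3 - \<mu>, 0, -\<beta>*x$1],
     vector [(1-p)*\<beta>*x$3, -\<beta>*x$3 - \<mu>, (1-p)*\<beta>*x$1 - \<beta>*x$2],
     vector [\<beta>*p*x$3, \<beta>*x$3, \<beta>*(p*x$1 + x$2) - (\<gamma>+\<mu>)]]"

lemma vec3_axis: "(vector [a,b,c] :: real^3) = a *\<^sub>R axis 1 1 + b *\<^sub>R axis 2 1 + c *\<^sub>R axis 3 1"
  by (simp add: vec_eq_iff forall_3 axis_def)

lemma field_deriv: "(field \<beta> \<gamma> \<mu> p has_derivative (\<lambda>h. jac \<beta> \<gamma> \<mu> p x *v h)) (at x)"
proof -
  have nth: "\<And>i. ((\<lambda>y::real^3. y$i) has_derivative (\<lambda>h. h$i)) (at x)"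
    by (rule bounded_linear_imp_has_derivative) auto
  have fe: "field \<beta> \<gamma> \<mu> p = (\<lambda>y. (\<mu> - \<beta> * y$1 * y$3 - \<mu> * y$1) *\<^sub>R axis 1 1
      + ((1 - p) * \<beta> * y$1 * y$3 - \<beta> * y$2 * y$3 - \<mu> * y$2) *\<^sub>R axis 2 1
      + (\<beta> * (p * y$1 + y$2) * y$3 - (\<gamma> + \<mu>) * y$3) *\<^sub>R axis 3 1)"
    by (simp add: fun_eq_iff field_def vec3_axis)
  show ?thesis unfolding fe
    by (auto intro!: derivative_eq_intros nth simp: fun_eq_iff vec_eq_iff forall_3 axis_def jac_def matrix_vector_mult_def sum_3 algebra_simps)
qed


theorem mainTheorem9:
  fixes \<beta> \<gamma> \<mu> p :: real
  assumes "\<beta> > 0" "\<gamma> > 0" "\<mu> > 0" "0 < p" "p < 1/2"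
    and "\<beta> / (\<gamma> + \<mu>) > 4 * (1 - p)"
    and "\<gamma> / \<mu> > F_fun p (\<beta> / (\<gamma> + \<mu>))"
  shows "\<exists>J :: real^3^3.
           (field \<beta> \<gamma> \<mu> p has_derivative (\<lambda>h. J *v h)) (at (E1 \<beta> \<gamma> \<mu> p)) \<and>
           (\<exists>r :: real. \<exists>z1 z2 :: complex.
              (\<forall>x :: complex. det (mat x - cmat J) = (x - complex_of_real r) * (x - z1) * (x - z2)) \<and>
              r < 0 \<and> Re z1 > 0 \<and> Re z2 > 0 \<and>
              ((z1 \<in> \<real> \<and> z2 \<in> \<real>) \<or> (z2 = cnj z1 \<and> Im z1 \<noteq> 0)))"
proof -
  note b = assms(1) and g = assms(2) and m = assms(3) and p0 = assms(4) and p1 = assms(5)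
  define G where "G = \<gamma> + \<mu>"
  define \<delta> where "\<delta> = \<beta> / (\<gamma> + \<mu>)"
  define s where "s = sqrt (1 - 4*(1-p)/\<delta>)"
  define u where "u = \<delta>*(1+s)/2"
  define v where "v = \<delta>*(1-s)/2"
  define A where "A = A1 \<beta> \<gamma> \<mu> p"
  have Gp: "G > 0" using g m by (simp add: G_def)
  have d4: "\<delta> > 4*(1-p)" using assms(6) by (simp add: \<delta>_def)
  have p1': "2*p < 1" using p1 by simp
  have d4': "\<delta> > 4 - 4*p" using d4 by (simp add: algebra_simps)
  have d2: "\<delta> > 2" using d4' p1' by linarith
  have bd: "\<beta> = \<delta>*G" using Gp by (simp add: \<delta>_def G_def)
  have r1: "4*(1-p)/\<delta> < 1" using d4 d2 by (simp add: divide_less_eq)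
  have r0: "4*(1-p)/\<delta> > 0" using d2 p1 by simp
  have s0: "s > 0" using r1 by (simp add: s_def)
  have s1: "s < 1" using r0 by (simp add: s_def)
  have s2: "s^2 = 1 - 4*(1-p)/\<delta>" using r1 by (simp add: s_def)
  have upv: "u + v = \<delta>" by (simp add: u_def v_def field_simps)
  have e: "\<delta> * s^2 = \<delta> - 4*(1-p)" using s2 d2 by (simp add: field_simps)
  have uv: "u * v = \<delta>*(1-p)"
  proof -
    have "u * v = \<delta>^2*(1-s^2)/4" by (simp add: u_def v_def power2_eq_square field_simps)
    also have "\<dots> = (\<delta>*\<delta> - \<delta>*(\<delta> * s^2))/4" by (simp add: algebra_simps power2_eq_square)
    also have "\<dots> = \<delta>*(1-p)" unfolding e by (simp add: field_simps)
    finally show ?thesis .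
  qed
  have u1: "u > 1"
  proof -
    have "\<delta>*(1+s) > 2*1" using d2 s0 by (smt (verit) mult_less_cancel_left1)
    then show ?thesis by (simp add: u_def)
  qed
  have vp: "v > 0" using d2 s1 by (simp add: v_def)
  have uv_gt: "u > v" using d2 s0 by (simp add: u_def v_def field_simps)
  have hp: "p = (u+v-u * v)/(u+v)" using uv upv d2 by (simp add: field_simps)
  have hb: "\<beta> = (u+v)*G" using bd upv by simp
  have inv: "inverse (1+\<gamma>/\<mu>) = \<mu>/G" using m g by (simp add: G_def field_simps)
  have hA0: "A = (1/2) * (\<mu>/G) * (1 - 2/\<delta> + s)"
    unfolding A_def A1_def Let_def inv \<delta>_def[symmetric] s_def[symmetric] by simp
  have hA: "A = \<mu>*(u-1)/((u+v)*G)"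
    unfolding hA0 upv using Gp d2 by (simp add: u_def field_simps)
  have dp: "\<delta> > 0" using d2 by simp
  have gm: "\<gamma>/\<mu>+1 = G/\<mu>" using m by (simp add: G_def field_simps)
  have hT: "\<delta>*(\<gamma>/\<mu>+1)*A = u - 1"
    unfolding gm hA upv using m Gp dp by (simp add: field_simps)
  have hS0: "S0_1 \<beta> \<gamma> \<mu> p = 1/u"
    unfolding S0_1_def Let_def \<delta>_def[symmetric] A_def[symmetric] hT by simp
  have hS1: "S1_1 \<beta> \<gamma> \<mu> p = (1-p)*(u-1)/u^2"
  proof -
    have "S1_1 \<beta> \<gamma> \<mu> p = (1-p)*(\<delta>*(\<gamma>/\<mu>+1)*A)/(\<delta>*(\<gamma>/\<mu>+1)*A+1)^2"
      unfolding S1_1_def Let_def \<delta>_def[symmetric] A_def[symmetric] by (simp only: mult.assoc)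
    then show ?thesis unfolding hT by simp
  qed
  have upvp: "u + v > 0" using dp upv by simp
  have up: "u > 0" using u1 by simp
  have Ev: "E1 \<beta> \<gamma> \<mu> p = vector [1/u, (1-p)*(u-1)/u^2, A]"
    by (simp add: E1_def hS0 hS1 A_def)
  have nz: "u + v \<noteq> 0" "u \<noteq> 0" "G \<noteq> 0" "\<mu> \<noteq> 0" using upvp up Gp m by auto
  have nz2: "(u+v)*G \<noteq> 0" using nz by simp
  have bA: "\<beta> * A = \<mu> * (u-1)" unfolding hA hb
    by (metis nz2 nonzero_mult_div_cancel_left times_divide_eq_right)
  have bA2: "A * \<beta> = \<mu> * (u-1)" using bA by (simp add: mult.commute)
  define J where "J = jac \<beta> \<gamma> \<mu> p (E1 \<beta> \<gamma> \<mu> p)"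
  have JE: "J = jac \<beta> \<gamma> \<mu> p (vector [1/u, (1-p)*(u-1)/u^2, A])" by (simp add: J_def Ev)
  have R11: "J$1$1 = -(\<beta>*A) - \<mu>" by (simp add: JE jac_def)
  have R21: "J$2$1 = (1-p)*(\<beta>*A)" by (simp add: JE jac_def ac_simps)
  have R22: "J$2$2 = -(\<beta>*A) - \<mu>" by (simp add: JE jac_def)
  have R31: "J$3$1 = p*(\<beta>*A)" by (simp add: JE jac_def ac_simps)
  have R32: "J$3$2 = \<beta>*A" by (simp add: JE jac_def)
  have J11: "J$1$1 = -\<mu> * u" unfolding R11 bA by (simp add: algebra_simps)
  have J12: "J$1$2 = 0" by (simp add: J_def jac_def)
  have J13: "J$1$3 = -(u+v) * G / u" using nz
    by (simp add: JE jac_def hb field_simps)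
  have J21: "J$2$1 = u * v * \<mu> * (u-1)/(u+v)" using nz unfolding R21 bA
    by (subst hp) (simp add: field_simps)
  have J22: "J$2$2 = -\<mu> * u" unfolding R22 bA by (simp add: algebra_simps)
  have qb: "(1-p)*\<beta> = u * v * G" using nz(1) unfolding hb
    by (subst hp) (simp add: field_simps)
  have R23: "J$2$3 = ((1-p)*\<beta>)/u - ((1-p)*\<beta>)*(u-1)/u^2" using nz
    by (simp add: JE jac_def field_simps power2_eq_square)
  have J23: "J$2$3 = G * v / u" using nz unfolding R23 qb
    by (simp add: field_simps power2_eq_square)
  have J31: "J$3$1 = (u+v-u * v) * \<mu> * (u-1)/(u+v)" using nz unfolding R31 bA
    by (subst hp) (simp add: field_simps)
  have J32: "J$3$2 = \<mu> * (u-1)" unfolding R32 bA ..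
  have pq: "p * (u+v) = u + v - u * v" using nz(1) by (subst hp) simp
  have pb: "p*\<beta> = (u + v - u * v) * G" unfolding hb using pq by (metis mult.assoc)
  have R33: "J$3$3 = (p*\<beta>)/u + ((1-p)*\<beta>)*(u-1)/u^2 - G" using nz
    by (simp add: JE jac_def G_def field_simps power2_eq_square)
  have J33: "J$3$3 = 0" using nz unfolding R33 qb pb
    by (simp add: field_simps power2_eq_square)
  have nz3: "u*u + u * v \<noteq> 0" "u*(u+v) \<noteq> 0" "(u+v)*u \<noteq> 0" using upvp up
    by (simp_all add: distrib_left[symmetric])
  have J13': "J$1$3 = -\<beta>/u" by (simp add: JE jac_def)
  have J21': "J$2$1 = (1-p)*(\<mu>*(u-1))" unfolding R21 bA ..
  have J31': "J$3$1 = p*(\<mu>*(u-1))" unfolding R31 bA ..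
  have "J$1$3*J$3$1 = -(p*\<beta>)*\<mu>*(u-1)/u" unfolding J13' J31' using nz by (simp add: field_simps)
  then have P31: "J$1$3*J$3$1 = -((u + v - u * v) * G)*\<mu>*(u-1)/u" unfolding pb .
  have "J$1$3*J$2$1 = -((1-p)*\<beta>)*\<mu>*(u-1)/u" unfolding J13' J21' using nz by (simp add: field_simps)
  then have P21: "J$1$3*J$2$1 = -(u * v * G)*\<mu>*(u-1)/u" unfolding qb .
  have dJ: "det J = (J$1$3*J$2$1)*J$3$2 - J$1$1*J$2$3*J$3$2 - (J$1$3*J$3$1)*J$2$2"
    unfolding det_3 J12 J33 by (simp add: algebra_simps)
  define a2 where "a2 = -(J$1$1 + J$2$2 + J$3$3)"
  define a1 where "a1 = J$1$1*J$2$2 - J$1$2*J$2$1 + J$1$1*J$3$3 - J$1$3*J$3$1 + J$2$2*J$3$3 - J$2$3*J$3$2"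
  define a0 where "a0 = -det J"
  define W where "W = 2*(u * v) - u - v"
  define Q where "Q = (u-1)*W"
  have a2v: "a2 = 2*\<mu>*u" unfolding a2_def J11 J22 J33 by simp
  have a1v: "a1 = \<mu>^2*u^2 + G*\<mu>*(u-1)*(1-v)" unfolding a1_def P31 J11 J12 J22 J23 J32 J33
    using nz by (simp add: field_simps power2_eq_square)
  have a0v: "a0 = G*\<mu>^2*(u-1)*(u-v)" unfolding a0_def dJ P31 P21 J11 J22 J23 J32
    using nz by (simp add: field_simps power2_eq_square)
  have Wd: "W = \<delta>*(1-2*p)"
  proof -
    have "W = 2*(u * v) - (u+v)" by (simp add: W_def)
    also have "\<dots> = \<delta>*(1-2*p)" unfolding uv upv by (simp add: algebra_simps)
    finally show ?thesis .
  qed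
  have Wp: "W > 0" unfolding Wd using dp p1' by simp
  have Qp: "Q > 0" unfolding Q_def using Wp u1 by simp
  have f1: "1 - 2*p = W/\<delta>" using dp Wd by (simp add: field_simps)
  have f2: "1 + s = 2*u/\<delta>" using dp by (simp add: u_def field_simps)
  have f3: "(\<delta> - 2) + \<delta> * s = 2*(u-1)" by (simp add: u_def algebra_simps)
  have hF: "F_fun p (\<beta> / (\<gamma> + \<mu>)) = \<delta>^2/(2*(W/\<delta>)) * ((2*u/\<delta>)^3/(2*(u-1))) - 1"
    unfolding F_fun_def \<delta>_def[symmetric] s_def[symmetric] f1 f2 f3 ..
  have u1': "u - 1 \<noteq> 0" "W \<noteq> 0" "\<delta> \<noteq> 0" using u1 Wp dp by auto
  have hF2: "\<delta>^2/(2*(W/\<delta>)) * ((2*u/\<delta>)^3/(2*(u-1))) = 2*u^3/Q"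
    using u1' by (simp add: Q_def field_simps power2_eq_square power3_eq_cube)
  have c1: "2*u^3/Q - 1 < \<gamma>/\<mu>" using assms(7) unfolding hF hF2 .
  have c2: "\<gamma>/\<mu> = G/\<mu> - 1" using m by (simp add: G_def field_simps)
  have c3: "2*u^3/Q < G/\<mu>" using c1 unfolding c2 by simp
  have c4: "2*u^3*\<mu> < G*Q" using c3 Qp m by (simp add: field_simps)
  have key: "a2*a1 - a0 = \<mu>^2*(2*\<mu>*u^3 - G*Q)"
    unfolding a2v a1v a0v Q_def W_def by (simp add: algebra_simps power2_eq_square power3_eq_cube)
  have "\<mu>^2*(2*\<mu>*u^3 - G*Q) < 0" using c4 m by (intro mult_pos_neg) (auto simp: algebra_simps)
  then have lt: "a2*a1 < a0" using key by simp
  have a0p: "a0 > 0" unfolding a0v using Gp m u1 uv_gt by (intro mult_pos_pos) auto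
  obtain r z1 z2 where R: "\<forall>x::complex. x^3 + of_real a2 * x^2 + of_real a1 * x + of_real a0
            = (x - of_real r)*(x-z1)*(x-z2)" and Rr: "r<0" "Re z1>0" "Re z2>0"
            "(z1\<in>\<real> \<and> z2\<in>\<real>) \<or> (z2 = cnj z1 \<and> Im z1 \<noteq> 0)"
    using cubic_roots[OF a0p lt] by blast
  have C: "\<forall>x::complex. det (mat x - cmat J) = (x - complex_of_real r) * (x - z1) * (x - z2)"
  proof
    fix x :: complex
    have "det (mat x - cmat J) = x^3 + of_real a2 * x^2 + of_real a1 * x + of_real a0"
      unfolding a2_def a1_def a0_def by (rule charpoly3)
    then show "det (mat x - cmat J) = (x - complex_of_real r) * (x - z1) * (x - z2)" using R by simp
  qed
  have D: "(field \<beta> \<gamma> \<mu> p has_derivative (\<lambda>h. J *v h)) (at (E1 \<beta> \<gamma> \<mu> p))"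
    unfolding J_def by (rule field_deriv)
  show ?thesis using D C Rr by blast
qed


end
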